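(* Let $H$, $L$ be as in the context, assume $L\mid Z$, and let $S$ be a positive divisor of $Z/L$. Then for $\mathcal T_0\subseteq[MZ)$, the pair $(S,\mathcal T_0)$ is a feasible solution if and only if there exist $\ell_{m,s}\in[L)$ for $m\in[M)$, $s\in[S)$ such that $\mathcal T_0=\bigcup_{m\in[M),\,s\in[S)}\mathcal C_{m,s,\ell_{m,s}}$.
   Context: Notation: $[n)=\{0,1,\dots,n-1\}$. Let $M,N,Z$ be positive integers and let $H$ be a binary $MZ\times NZ$ matrix made of $M\times N$ blocks, each a $Z\times Z$ circulant; assume $H$ has no zero row and no two identical rows. Rows are indexed by $[MZ)$. For $i\in[MZ)$ and integer $s$, $\pi^s(i)=Z\lfloor i/Z\rfloor+((i+s)\bmod Z)$, and for $\mathcal T\subseteq[MZ)$, $\pi^s(\mathcal T)=\{\pi^s(x):x\in\mathcal T\}$. Fix an integer $L>1$. A pair $(S,\mathcal T_0)$, $S$ a positive integer and $\mathcal T_0\subseteq[MZ)$, is a feasible solution if, setting $\mathcal T_l=\pi^{lS}(\mathcal T_0)$ for $l\in[L)$, the sets $\mathcal T_0,\dots,\mathcal T_{L-1}$ are pairwise disjoint and their union is $[MZ)$. For $m\in[M)$, $s\in[S)$, $l\in[L)$ define the class $\mathcal C_{m,s,l}=\{mZ+((s+lS+rLS)\bmod Z): r\in\mathbb Z\}$ (these $LS$-classes partition $[MZ)$; for fixed $(m,s)$ the $L$ classes $\mathcal C_{m,s,0},\dots,\mathcal C_{m,s,L-1}$ partition $\{mZ+((s+rS)\bmod Z):r\in\mathbb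 Z\}$). *)

theory Defs
  imports Main
begin

definition pi_shift :: "nat \<Rightarrow> int \<Rightarrow> nat \<Rightarrow> nat" where
  "pi_shift Z s i = Z * (i div Z) + nat ((int i + s) mod int Z)"

definition circulant_blocks :: "nat \<Rightarrow> nat \<Rightarrow> nat \<Rightarrow> (nat \<Rightarrow> nat \<Rightarrow> bool) \<Rightarrow> bool" where
  "circulant_blocks M N Z H \<longleftrightarrow>
     (\<forall>m<M. \<forall>n<N. \<forall>a<Z. \<forall>b<Z.
        H (m*Z + a) (n*Z + b) = H (m*Z + (a+1) mod Z) (n*Z + (b+1) mod Z))"

definition no_zero_row :: "nat \<Rightarrow> nat \<Rightarrow> nat \<Rightarrow> (nat \<Rightarrow> nat \<Rightarrow> bool) \<Rightarrow> bool" where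
  "no_zero_row M N Z H \<longleftrightarrow> (\<forall>i<M*Z. \<exists>j<N*Z. H i j)"

definition distinct_rows :: "nat \<Rightarrow> nat \<Rightarrow> nat \<Rightarrow> (nat \<Rightarrow> nat \<Rightarrow> bool) \<Rightarrow> bool" where
  "distinct_rows M N Z H \<longleftrightarrow> (\<forall>i<M*Z. \<forall>i'<M*Z. i \<noteq> i' \<longrightarrow> (\<exists>j<N*Z. H i j \<noteq> H i' j))"

definition T_set :: "nat \<Rightarrow> nat \<Rightarrow> nat set \<Rightarrow> nat \<Rightarrow> nat set" where
  "T_set Z S T0 l = pi_shift Z (int (l * S)) ` T0"

definition feasible :: "nat \<Rightarrow> nat \<Rightarrow> nat \<Rightarrow> nat \<Rightarrow> nat set \<Rightarrow> bool" where
  "feasible M Z L S T0 \<longleftrightarrow>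
     S > 0 \<and> T0 \<subseteq> {..<M*Z} \<and>
     (\<forall>l<L. \<forall>l'<L. l \<noteq> l' \<longrightarrow> T_set Z S T0 l \<inter> T_set Z S T0 l' = {}) \<and>
     (\<Union>l<L. T_set Z S T0 l) = {..<M*Z}"

definition C_class :: "nat \<Rightarrow> nat \<Rightarrow> nat \<Rightarrow> nat \<Rightarrow> nat \<Rightarrow> nat \<Rightarrow> nat set" where
  "C_class Z L S m s l =
     {m*Z + nat ((int s + int l * int S + r * int L * int S) mod int Z) | r::int. True}"

end

theory Submission
  imports Defs "HOL-Number_Theory.Cong"
begin

lemma modcancel: "(i + k) mod (Z::nat) = (j + k) mod Z \<Longrightarrow> i mod Z = j mod Z"
  using cong_add_rcancel_nat unfolding cong_def by blast

definition ps :: "nat \<Rightarrow> nat \<Rightarrow> nat \<Rightarrow> nat" where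
  "ps Z k i = Z * (i div Z) + (i + k) mod Z"

lemma T_ps: "T_set Z S T0 l = ps Z (l*S) ` T0"
proof -
  have "\<And>i. nat ((int i + int l * int S) mod int Z) = (i+l*S) mod Z"
    by (metis nat_int of_nat_add of_nat_mod of_nat_mult)
  then show ?thesis unfolding T_set_def ps_def pi_shift_def by simp
qed

lemma ps_div: "Z > 0 \<Longrightarrow> ps Z k i div Z = i div Z"
  by (simp add: ps_def)

lemma ps_mod: "ps Z k i mod Z = (i + k) mod Z"
  by (simp add: ps_def)

lemma ps_inj: "Z > 0 \<Longrightarrow> ps Z k i = ps Z k j \<Longrightarrow> i = j"
proof -
  assume Z: "Z > 0" and e: "ps Z k i = ps Z k j"
  have "i div Z = j div Z" using ps_div[OF Z, of k i] ps_div[OF Z, of k j] e by simp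
  moreover have "i mod Z = j mod Z" using ps_mod[of Z k i] ps_mod[of Z k j] e modcancel by metis
  ultimately show ?thesis by (metis div_mult_mod_eq)
qed

lemma ps_comp: "Z > 0 \<Longrightarrow> ps Z a (ps Z b i) = ps Z (a + b) i"
proof -
  assume Z: "Z > 0"
  have "(ps Z b i + a) mod Z = (ps Z b i mod Z + a) mod Z" by (simp add: mod_add_left_eq)
  also have "\<dots> = ((i + b) mod Z + a) mod Z" by (simp add: ps_mod)
  also have "\<dots> = (i + b + a) mod Z" by (rule mod_add_left_eq)
  also have "\<dots> = (i + (a + b)) mod Z" by (simp add: ac_simps)
  finally show ?thesis using ps_div[OF Z] unfolding ps_def[of Z a] by (simp add: ps_def)
qed

lemma ps_0: "ps Z 0 i = i"
  by (simp add: ps_def)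

lemma ps_Z: "ps Z Z i = i"
  by (simp add: ps_def)

lemma ps_modK: "K dvd Z \<Longrightarrow> ps Z k i mod K = (i + k) mod K"
proof -
  assume K: "K dvd Z"
  obtain c where c: "Z = K*c" using K by (auto elim: dvdE)
  have "Z * (i div Z) + (i + k) mod Z = (i + k) mod Z + K * (c * (i div Z))"
    unfolding c by (simp add: ac_simps)
  then have "ps Z k i mod K = ((i + k) mod Z) mod K" unfolding ps_def by (simp only: mod_mult_self2)
  then show ?thesis using K by (simp add: mod_mod_cancel)
qed

lemma ps_lt: "Z > 0 \<Longrightarrow> (ps Z k i < M*Z) = (i < M*Z)"
  by (metis ps_div div_less_iff_less_mult)

lemma decomp: "(x::nat) mod (S*L) = S * (x div S mod L) + x mod S"
  by (rule mod_mult2_eq)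

lemma divmodL: "S > 0 \<Longrightarrow> (x::nat) div S mod L = x mod (S*L) div S"
  by (simp add: decomp)

lemma Cmem:
  assumes Z: "Z > 0" and s: "s < S" and l: "l < L" and K: "L*S dvd Z"
  shows "n \<in> C_class Z L S m s l \<longleftrightarrow> n div Z = m \<and> n mod (L*S) = s + l*S"
proof
  have sl: "s + l*S < L*S"
  proof -
    have "s + l*S < S + l*S" using s by simp
    also have "\<dots> = (Suc l) * S" by simp
    also have "\<dots> \<le> L*S" using l by (intro mult_right_mono) auto
    finally show ?thesis .
  qed
  assume "n \<in> C_class Z L S m s l"
  then obtain r where n: "n = m*Z + nat ((int s + int l * int S + r * int L * int S) mod int Z)"
    unfolding C_class_def by auto
  define w where "w = int s + int l * int S + r * int L * int S"
  have w0: "w mod int Z \<ge> 0" using Z by simp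
  have wZ: "w mod int Z < int Z" using Z by simp
  have nl: "nat (w mod int Z) < Z" using wZ w0 by (simp add: nat_less_iff)
  have ndiv: "n div Z = m" using n nl Z unfolding w_def[symmetric] by simp
  have KZ: "int (L*S) dvd int Z" using K by (simp only: of_nat_dvd_iff)
  have "int (n mod (L*S)) = int n mod int (L*S)" by (simp add: of_nat_mod)
  also have "int n = int (m*Z) + w mod int Z" using n w0 unfolding w_def[symmetric] by simp
  also have "(int (m*Z) + w mod int Z) mod int (L*S) = (w mod int Z) mod int (L*S)"
  proof -
    obtain c where c: "Z = L*S*c" using K by (auto elim: dvdE)
    have "int (m*Z) + w mod int Z = w mod int Z + (int m * int c) * int (L*S)"
      unfolding c by (simp add: algebra_simps)
    then show ?thesis by (metis mod_mult_self1)
  qed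
  also have "\<dots> = w mod int (L*S)" using KZ by (simp add: mod_mod_cancel)
  also have "w = int (s + l*S) + r * int (L*S)" unfolding w_def by (simp add: algebra_simps)
  also have "(int (s + l*S) + r * int (L*S)) mod int (L*S) = int (s + l*S) mod int (L*S)"
    by (rule mod_mult_self1)
  also have "\<dots> = int ((s + l*S) mod (L*S))" by (rule of_nat_mod[symmetric])
  also have "\<dots> = int (s + l*S)" using sl by simp
  finally have "int (n mod (L*S)) = int (s + l*S)" .
  then have "n mod (L*S) = s + l*S" by (simp only: of_nat_eq_iff)
  with ndiv show "n div Z = m \<and> n mod (L*S) = s + l*S" by simp
next
  assume h: "n div Z = m \<and> n mod (L*S) = s + l*S"
  define r where "r = int (n mod Z div (L*S))"
  have "n mod Z mod (L*S) = s + l*S" using h K by (simp add: mod_mod_cancel)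
  then have "n mod Z = (n mod Z div (L*S)) * (L*S) + (s + l*S)" by (metis div_mult_mod_eq)
  then have "int (n mod Z) = int s + int l * int S + r * int L * int S"
    unfolding r_def by (metis (no_types, lifting) add.commute mult.assoc of_nat_add of_nat_mult)
  then have "nat ((int s + int l * int S + r * int L * int S) mod int Z) = n mod Z"
    by (metis nat_int of_nat_mod mod_mod_trivial)
  then have "n = m*Z + nat ((int s + int l * int S + r * int L * int S) mod int Z)"
    using h by (metis div_mult_mod_eq)
  then show "n \<in> C_class Z L S m s l" unfolding C_class_def by blast
qed

lemma Cmem2:
  assumes Z: "Z > 0" and s: "s < S" and l: "l < L" and K: "L*S dvd Z"
  shows "n \<in> C_class Z L S m s l \<longleftrightarrow> n div Z = m \<and> n mod S = s \<and> n div S mod L = l"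
proof -
  have S: "S > 0" using s by simp
  have "n mod (L*S) = s + l*S \<longleftrightarrow> n mod S = s \<and> n div S mod L = l"
  proof
    assume e: "n mod (L*S) = s + l*S"
    have e2: "S * (n div S mod L) + n mod S = s + l*S" using e decomp[of n S L] by (simp add: mult.commute)
    have "n mod S = s" using arg_cong[OF e2, of "\<lambda>x. x mod S"] s by simp
    moreover then have "n div S mod L = l" using e2 S by (simp add: mult.commute)
    ultimately show "n mod S = s \<and> n div S mod L = l" by simp
  next
    assume "n mod S = s \<and> n div S mod L = l"
    then show "n mod (L*S) = s + l*S" using decomp[of n S L] by (simp add: mult.commute)
  qed
  then show ?thesis using Cmem[OF assms] by simp
qed


lemma sl_lt: "s < S \<Longrightarrow> l < L \<Longrightarrow> s + l*S < L*(S::nat)"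
proof -
  assume s: "s < S" and l: "l < L"
  have "s + l*S < S + l*S" using s by simp
  also have "\<dots> = (Suc l) * S" by simp
  also have "\<dots> \<le> L*S" using l by (intro mult_right_mono) auto
  finally show ?thesis .
qed

lemma ps_modS: "S dvd Z \<Longrightarrow> ps Z k y mod S = (y + k) mod S"
  by (rule ps_modK)

lemma ps_divSL: "S > 0 \<Longrightarrow> L*S dvd Z \<Longrightarrow> ps Z k y div S mod L = (y + k) div S mod L"
proof -
  assume S: "S > 0" and K: "L*S dvd Z"
  have "ps Z k y div S mod L = ps Z k y mod (S*L) div S" by (rule divmodL[OF S])
  also have "\<dots> = (y + k) mod (S*L) div S" using ps_modK[of "S*L" Z k y] K by (simp add: mult.commute)
  also have "\<dots> = (y + k) div S mod L" by (rule divmodL[OF S, symmetric])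
  finally show ?thesis .
qed

lemma vmod: "(K::nat) dvd Z \<Longrightarrow> (m*Z + t) mod K = t mod K"
  by (metis add_0 mod_add_left_eq dvd_imp_mod_0 dvd_mult)

lemma vdiv: "(Z::nat) > 0 \<Longrightarrow> s + t < Z \<Longrightarrow> (m*Z + s + t) div Z = m"
proof -
  assume Z: "Z > 0" and a: "s + t < Z"
  have e0: "m*Z+s+t = (s + t) + Z*m" by simp
  have "(m*Z+s+t) div Z = ((s + t) + Z*m) div Z" by (simp only: e0)
  also have "\<dots> = (s + t) div Z + m" using Z by simp
  finally show ?thesis using a by simp
qed

lemma vps: "(Z::nat) > 0 \<Longrightarrow> s + l'*S < Z \<Longrightarrow> l \<le> l' \<Longrightarrow>
    ps Z ((l'-l)*S) (m*Z+s+l*S) = m*Z+s+l'*S"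
proof -
  assume Z: "Z > 0" and lt: "s + l'*S < Z" and le: "l \<le> l'"
  have le2: "l*S \<le> l'*S" using le by simp
  have a: "s + l*S < Z" using lt le2 by linarith
  have e0: "m*Z+s+l*S = (s + l*S) + Z*m" by simp
  have "(m*Z+s+l*S) div Z = ((s + l*S) + Z*m) div Z" by (simp only: e0)
  also have "\<dots> = (s + l*S) div Z + m" using Z by simp
  finally have "(m*Z+s+l*S) div Z = (s + l*S) div Z + m" .
  then have "(m*Z+s+l*S) div Z = m" using a by simp
  moreover have e3: "m*Z+s+l*S + (l'-l)*S = (s + l'*S) + Z*m"
    using le2 by (simp add: diff_mult_distrib)
  moreover have "((s + l'*S) + Z*m) mod Z = s + l'*S" using lt by simp
  ultimately show ?thesis unfolding ps_def by (simp only: e3) simp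
qed

theorem theorem2:
  fixes M N Z L S :: nat and H :: "nat \<Rightarrow> nat \<Rightarrow> bool" and T0 :: "nat set"
  assumes "M > 0" and "N > 0" and "Z > 0"
    and "circulant_blocks M N Z H" and "no_zero_row M N Z H" and "distinct_rows M N Z H"
    and "L > 1" and "L dvd Z"
    and "S > 0" and "S dvd (Z div L)"
    and "T0 \<subseteq> {..<M*Z}"
  shows "feasible M Z L S T0 \<longleftrightarrow>
    (\<exists>lv :: nat \<Rightarrow> nat \<Rightarrow> nat. (\<forall>m<M. \<forall>s<S. lv m s < L) \<and>
        T0 = (\<Union>m<M. \<Union>s<S. C_class Z L S m s (lv m s)))"
proof -
  have Z: "Z > 0" and S: "S > 0" and L1: "L > 1" and T0s: "T0 \<subseteq> {..<M*Z}" using assms by auto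
  have L: "L > 0" using L1 by simp
  have K: "L*S dvd Z"
  proof -
    obtain c where c: "Z div L = S*c" using assms(10) by (auto elim: dvdE)
    have "Z = L*(Z div L)" using assms(8) by simp
    then have "Z = L*S*c" using c by simp
    then show ?thesis by simp
  qed
  have SZ: "S dvd Z" using K by (meson dvd_trans dvd_triv_right)
  have KZ: "L*S \<le> Z" using K Z by (simp add: dvd_imp_le)
  have T0lt: "\<And>u. u \<in> T0 \<Longrightarrow> u < M*Z" using T0s by auto
  show ?thesis
  proof
    assume F: "feasible M Z L S T0"
    have cov': "\<exists>l<L. \<exists>u\<in>T0. x = ps Z (l*S) u" if x: "x < M*Z" for x
    proof -
      have "x \<in> (\<Union>l<L. T_set Z S T0 l)" using F x unfolding feasible_def by auto
      then show ?thesis unfolding T_ps by auto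
    qed
    have dj': "l = l'" if "l<L" "l'<L" "u\<in>T0" "u'\<in>T0" "ps Z (l*S) u = ps Z (l'*S) u'" for l l' u u'
    proof (rule ccontr)
      assume "l \<noteq> l'"
      then have "T_set Z S T0 l \<inter> T_set Z S T0 l' = {}" using F that unfolding feasible_def by auto
      then show False using that unfolding T_ps by blast
    qed
    have cl1: "ps Z (L*S) y \<in> T0" if y: "y \<in> T0" for y
    proof -
      define w where "w = ps Z ((L-1)*S) y"
      have e1: "S + (L-1)*S = L*S" using L by (cases L) auto
      have z: "ps Z (L*S) y = ps Z S w" unfolding w_def using ps_comp[OF Z] e1 by simp
      have "ps Z (L*S) y < M*Z" using ps_lt[OF Z] T0lt[OF y] by simp
      then obtain l u where l: "l < L" and u: "u \<in> T0" and e: "ps Z (L*S) y = ps Z (l*S) u"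
        using cov' by blast
      show ?thesis
      proof (cases "l = 0")
        case True
        then show ?thesis using e u ps_0 by simp
      next
        case False
        have e2: "S + (l-1)*S = l*S" using False by (cases l) auto
        have "ps Z (l*S) u = ps Z S (ps Z ((l-1)*S) u)" using ps_comp[OF Z] e2 by simp
        then have "ps Z S w = ps Z S (ps Z ((l-1)*S) u)" using z e by simp
        then have "w = ps Z ((l-1)*S) u" by (rule ps_inj[OF Z])
        then have "L - 1 = l - 1" using dj'[of "L-1" "l-1" y u] y u l L unfolding w_def by simp
        then show ?thesis using l False L by simp
      qed
    qed
    have clj: "ps Z (j*(L*S)) y \<in> T0" if y: "y \<in> T0" for y j
    proof (induction j)
      case 0
      then show ?case using y ps_0 by simp
    next
      case (Suc j)
      have "ps Z (Suc j*(L*S)) y = ps Z (L*S) (ps Z (j*(L*S)) y)" using ps_comp[OF Z] by simp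
      then show ?case using cl1 Suc by simp
    qed
    have cl: "y' \<in> T0" if y: "y \<in> T0" and d: "y' div Z = y div Z" and md: "y' mod (L*S) = y mod (L*S)" for y y'
    proof -
      define a where "a = y' mod Z + Z"
      define b where "b = y mod Z"
      have ba: "b \<le> a" unfolding a_def b_def using Z by (simp add: less_imp_le_nat trans_le_add2)
      have "a mod (L*S) = (y' mod Z) mod (L*S)" unfolding a_def using vmod[OF K, of 1 "y' mod Z"] by (simp add: add.commute)
      then have "a mod (L*S) = y' mod (L*S)" using K by (simp add: mod_mod_cancel)
      moreover have "b mod (L*S) = y mod (L*S)" unfolding b_def using K by (simp add: mod_mod_cancel)
      ultimately have "a mod (L*S) = b mod (L*S)" using md by simp
      then have "L*S dvd a - b" using mod_eq_dvd_iff_nat[OF ba] by blast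
      then obtain j where j: "a - b = j*(L*S)" by (metis dvdE mult.commute)
      have yeq: "y = Z*(y div Z) + b" unfolding b_def by simp
      have "y + (a - b) = Z*(y div Z) + a" using yeq ba by linarith
      then have "(y + (a - b)) mod Z = y' mod Z" unfolding a_def by simp
      moreover have "Z*(y div Z) + y' mod Z = y'" using d[symmetric] by simp
      ultimately have "ps Z (a - b) y = y'" unfolding ps_def by simp
      then show ?thesis using clj[OF y, of j] j by simp
    qed
    have ex: "\<exists>l<L. m*Z + s + l*S \<in> T0" if m: "m < M" and s: "s < S" for m s
    proof -
      define x where "x = m*Z + s + (L-1)*S"
      have L1L: "L-1 < L" using L by simp
      have "s + (L-1)*S < L*S" by (rule sl_lt[OF s L1L])
      then have lt: "s + (L-1)*S < Z" using KZ by linarith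
      have "Suc m * Z = m*Z + Z" by simp
      then have "x < (Suc m)*Z" unfolding x_def using lt by linarith
      also have "\<dots> \<le> M*Z" using m by (intro mult_right_mono) auto
      finally obtain j u where j: "j < L" and u: "u \<in> T0" and e: "x = ps Z (j*S) u"
        using cov' by blast
      have jj: "(L - 1) - (L - 1 - j) = j" using j by simp
      have "ps Z (j*S) (m*Z + s + (L-1-j)*S) = x"
        using vps[OF Z lt diff_le_self, of j m] unfolding x_def by (simp only: jj)
      then have "ps Z (j*S) u = ps Z (j*S) (m*Z + s + (L-1-j)*S)" using e by simp
      then have "u = m*Z + s + (L-1-j)*S" by (rule ps_inj[OF Z])
      then show ?thesis using u L by (intro exI[of _ "L-1-j"]) simp
    qed
    have un: "l = l'" if m: "m < M" and s: "s < S" and l: "l < L" and l': "l' < L"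
      and v: "m*Z+s+l*S \<in> T0" and v': "m*Z+s+l'*S \<in> T0" for m s l l'
    proof -
      have gen: "a = b" if "a \<le> b" "a < L" "b < L" "m*Z+s+a*S \<in> T0" "m*Z+s+b*S \<in> T0" for a b
      proof -
        have "s + b*S < L*S" by (rule sl_lt[OF s \<open>b < L\<close>])
        then have lt: "s + b*S < Z" using KZ by linarith
        have "ps Z ((b-a)*S) (m*Z+s+a*S) = ps Z (0*S) (m*Z+s+b*S)"
          using vps[OF Z lt \<open>a \<le> b\<close>] ps_0 by simp
        moreover have "b - a < L" using that by linarith
        ultimately have "b - a = 0" using dj'[of "b-a" 0 "m*Z+s+a*S" "m*Z+s+b*S"] that L by blast
        then show ?thesis using that by simp
      qed
      show ?thesis
      proof (cases "l \<le> l'")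
        case True then show ?thesis using gen[of l l'] l l' v v' by simp
      next
        case False then show ?thesis using gen[of l' l] l l' v v' by simp
      qed
    qed
    define lv where "lv m s = (THE l. l < L \<and> m*Z+s+l*S \<in> T0)" for m s
    have lvP: "lv m s < L \<and> m*Z+s+lv m s*S \<in> T0" if "m < M" "s < S" for m s
    proof -
      have "\<exists>!l. l < L \<and> m*Z+s+l*S \<in> T0" using ex[OF that] un[OF that] by blast
      then show ?thesis unfolding lv_def by (rule theI')
    qed
    show "\<exists>lv. (\<forall>m<M. \<forall>s<S. lv m s < L) \<and> T0 = (\<Union>m<M. \<Union>s<S. C_class Z L S m s (lv m s))"
    proof (intro exI[of _ lv] conjI allI impI)
      show "\<And>m s. m < M \<Longrightarrow> s < S \<Longrightarrow> lv m s < L" using lvP by blast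
      show "T0 = (\<Union>m<M. \<Union>s<S. C_class Z L S m s (lv m s))"
      proof (rule set_eqI, rule iffI)
        fix y assume y: "y \<in> T0"
        define m where "m = y div Z"
        define s where "s = y mod S"
        define l where "l = y div S mod L"
        have mM: "m < M" unfolding m_def using T0lt[OF y] Z by (simp add: div_less_iff_less_mult)
        have sS: "s < S" unfolding s_def using S by simp
        have lL: "l < L" unfolding l_def using L by simp
        have ym: "y mod (L*S) = s + l*S" unfolding s_def l_def using decomp[of y S L]
          by (simp add: mult.commute)
        have vlt: "s + l*S < L*S" by (rule sl_lt[OF sS lL])
        have "m*Z + s + l*S \<in> T0"
        proof (rule cl[OF y])
          have "s + l*S < Z" using vlt KZ by linarith
          then show "(m*Z + s + l*S) div Z = y div Z" using vdiv[OF Z] unfolding m_def by simp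
          have "(m*Z + (s + l*S)) mod (L*S) = s + l*S" using vmod[OF K] vlt by simp
          then show "(m*Z + s + l*S) mod (L*S) = y mod (L*S)" using ym by (simp add: add.assoc)
        qed
        then have "lv m s = l" using un[OF mM sS _ lL] lvP[OF mM sS] by blast
        moreover have "y \<in> C_class Z L S m s l" using Cmem[OF Z sS lL K] ym m_def by simp
        ultimately show "y \<in> (\<Union>m<M. \<Union>s<S. C_class Z L S m s (lv m s))" using mM sS by blast
      next
        fix y assume "y \<in> (\<Union>m<M. \<Union>s<S. C_class Z L S m s (lv m s))"
        then obtain m s where mM: "m < M" and sS: "s < S" and yc: "y \<in> C_class Z L S m s (lv m s)" by blast
        have lL: "lv m s < L" and v: "m*Z + s + lv m s * S \<in> T0" using lvP[OF mM sS] by auto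
        have ym: "y div Z = m" "y mod (L*S) = s + lv m s * S" using Cmem[OF Z sS lL K] yc by auto
        have vlt: "s + lv m s * S < L*S" by (rule sl_lt[OF sS lL])
        show "y \<in> T0"
        proof (rule cl[OF v])
          have "s + lv m s * S < Z" using vlt KZ by linarith
          then show "y div Z = (m*Z + s + lv m s * S) div Z" using vdiv[OF Z] ym by simp
          have "(m*Z + (s + lv m s * S)) mod (L*S) = s + lv m s * S" using vmod[OF K] vlt by simp
          then show "y mod (L*S) = (m*Z + s + lv m s * S) mod (L*S)" using ym by (simp add: add.assoc)
        qed
      qed
    qed
  next
    assume "\<exists>lv. (\<forall>m<M. \<forall>s<S. lv m s < L) \<and> T0 = (\<Union>m<M. \<Union>s<S. C_class Z L S m s (lv m s))"
    then obtain lv where hlv: "\<And>m s. m < M \<Longrightarrow> s < S \<Longrightarrow> lv m s < L"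
      and T0eq: "T0 = (\<Union>m<M. \<Union>s<S. C_class Z L S m s (lv m s))" by blast
    have T0mem: "y \<in> T0 \<longleftrightarrow> y < M*Z \<and> y div S mod L = lv (y div Z) (y mod S)" for y
    proof
      assume "y \<in> T0"
      then obtain m s where mM: "m < M" and sS: "s < S" and yc: "y \<in> C_class Z L S m s (lv m s)"
        using T0eq by blast
      have "y div Z = m \<and> y mod S = s \<and> y div S mod L = lv m s" using Cmem2[OF Z sS hlv[OF mM sS] K] yc by simp
      then show "y < M*Z \<and> y div S mod L = lv (y div Z) (y mod S)" using mM Z
        by (simp add: div_less_iff_less_mult[symmetric])
    next
      assume h: "y < M*Z \<and> y div S mod L = lv (y div Z) (y mod S)"
      have mM: "y div Z < M" using h Z by (simp add: div_less_iff_less_mult)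
      have sS: "y mod S < S" using S by simp
      have "y \<in> C_class Z L S (y div Z) (y mod S) (lv (y div Z) (y mod S))"
        using Cmem2[OF Z sS hlv[OF mM sS] K] h by simp
      then show "y \<in> T0" using T0eq mM sS by blast
    qed
    have shiftS: "ps Z (l*S) y mod S = y mod S" for l y using ps_modS[OF SZ] by simp
    have shiftL: "ps Z (l*S) y div S mod L = (y div S mod L + l) mod L" for l y
    proof -
      have "ps Z (l*S) y div S mod L = (y + l*S) div S mod L" by (rule ps_divSL[OF S K])
      also have "(y + l*S) div S = y div S + l" using S by simp
      also have "(y div S + l) mod L = (y div S mod L + l) mod L" by (simp add: mod_add_left_eq)
      finally show ?thesis .
    qed
    have canc: "a = b" if "a < L" "b < L" "(a + c) mod L = (b + c) mod L" for a b c
      using modcancel[OF that(3)] that by simp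
    show "feasible M Z L S T0"
      unfolding feasible_def
    proof (intro conjI allI impI)
      show "S > 0" by (rule S)
      show "T0 \<subseteq> {..<M*Z}" by (rule T0s)
      fix l l' assume l: "l < L" and l': "l' < L" and ne: "l \<noteq> l'"
      show "T_set Z S T0 l \<inter> T_set Z S T0 l' = {}"
      proof (rule ccontr)
        assume "T_set Z S T0 l \<inter> T_set Z S T0 l' \<noteq> {}"
        then obtain y y' where y: "y \<in> T0" and y': "y' \<in> T0" and e: "ps Z (l*S) y = ps Z (l'*S) y'"
          unfolding T_ps by blast
        have d: "y div Z = y' div Z" using ps_div[OF Z, of "l*S" y] ps_div[OF Z, of "l'*S" y'] e by simp
        have md: "y mod S = y' mod S" using shiftS[of l y] shiftS[of l' y'] e by simp
        have "(y div S mod L + l) mod L = (y' div S mod L + l') mod L" using shiftL[of l y] shiftL[of l' y'] e by simp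
        then have "(l + lv (y div Z) (y mod S)) mod L = (l' + lv (y div Z) (y mod S)) mod L"
          using T0mem y y' d md by (simp add: add.commute)
        then show False using canc[OF l l'] ne by blast
      qed
    next
      show "(\<Union>l<L. T_set Z S T0 l) = {..<M*Z}"
      proof
        show "(\<Union>l<L. T_set Z S T0 l) \<subseteq> {..<M*Z}"
          unfolding T_ps using T0lt ps_lt[OF Z] by auto
        show "{..<M*Z} \<subseteq> (\<Union>l<L. T_set Z S T0 l)"
        proof
          fix x assume "x \<in> {..<M*Z}"
          then have x: "x < M*Z" by simp
          define c where "c = lv (x div Z) (x mod S)"
          have mM: "x div Z < M" using x Z by (simp add: div_less_iff_less_mult)
          have cL: "c < L" unfolding c_def using hlv[OF mM] S by simp
          define a where "a = x div S mod L"
          define l where "l = (a + (L - c)) mod L"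
          have lL: "l < L" unfolding l_def using L by simp
          have lS: "l*S \<le> Z" using lL KZ
            by (meson le_trans less_imp_le_nat mult_le_cancel2)
          have ZS: "Z = (Z div S)*S" using SZ by simp
          define k where "k = (Z div S - l)*S"
          have "(Z div S - l)*S = (Z div S)*S - l*S" by (simp add: diff_mult_distrib)
          then have lk: "l*S + k = Z" unfolding k_def using lS ZS by linarith
          define y where "y = ps Z k x"
          have xy: "ps Z (l*S) y = x" unfolding y_def using ps_comp[OF Z] lk ps_Z by simp
          have yl: "y < M*Z" unfolding y_def using ps_lt[OF Z] x by simp
          have yd: "y div Z = x div Z" unfolding y_def using ps_div[OF Z] by simp
          have ys: "y mod S = x mod S" unfolding y_def k_def using ps_modS[OF SZ] by simp
          have "(y div S mod L + l) mod L = a" using shiftL[of l y] xy unfolding a_def by simp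
          moreover have "(c + l) mod L = a"
          proof -
            have "(c + l) mod L = (c + (a + (L - c))) mod L" unfolding l_def by (simp add: mod_add_right_eq)
            also have "c + (a + (L - c)) = a + L" using cL by simp
            finally show ?thesis unfolding a_def by simp
          qed
          ultimately have "y div S mod L = c" using canc[of "y div S mod L" c l] cL L by simp
          then have "y \<in> T0" using T0mem yl yd ys unfolding c_def by simp
          then show "x \<in> (\<Union>l<L. T_set Z S T0 l)" using xy lL unfolding T_ps by blast
        qed
      qed
    qed
  qed
qed

end
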